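(* Let $X_1,\dots,X_m$ be jointly distributed random variables, each taking values in $\{0,1\}^t$, that have $(T,\varepsilon_1)$ conditional pseudo-min-entropy $\alpha$. Let $H$ be an extractor family $\{0,1\}^t\times\{0,1\}^r\to\{0,1\}^\ell$ for min-entropy $\alpha$ with error $\varepsilon_2$, such that every function in the support of $H$ is computable by a circuit of size $T_0$. Let $R_1,\dots,R_m$ be independent uniform elements of $\{0,1\}^r$, independent of $X_1,\dots,X_m$. Then with probability at least $1/2$ over the choice of a function $h\sim H$, the distribution $(h(X_1,R_1),\dots,h(X_m,R_m))$ is $(T-mT_0,\ m\varepsilon_1+2m^2\varepsilon_2)$-pseudorandom.
   Context: A sequence $X_1,\dots,X_m$ of jointly distributed random variables on $\{0,1\}^t$ has $(s,\varepsilon)$ conditional pseudo-min-entropy $\alpha$ if for every $1\le i\le m$ there is a random variable $Y_i$ jointly distributed with $X_1,\dots,X_{i-1}$ such that (i) for every possible value of $(X_1,\dots,X_{i-1})$, the min-entropy of $Y_i$ conditioned on that value is at least $\alpha$, and (ii) for every circuit $D$ of size at most $s$, $|\Pr[D(X_1,\dots,X_{i-1},X_i)=1]-\Pr[D(X_1,\dots,X_{i-1},Y_i)=1]|\le\varepsilon$. An extractor family for min-entropy $\alpha$ with error $\varepsilon$ is a distribution $H$ on functions $\{0,1\}^t\times\{0,1\}^r\to\{0,1\}^\ell$ such that for every random variable $X$ on $\{0,1\}^t$ of min-entropy at least $\alpha$, $(H,H(X,U_r))$ and $(H,U_\ell)$ are within statistical distance $\varepsilon$ (with $H,X,U_r$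 independent, $U_r,U_\ell$ uniform). A random variable $Z$ on $\{0,1\}^N$ is $(s,\varepsilon)$-pseudorandom if for every circuit $D$ of size at most $s$, $|\Pr[D(Z)=1]-\Pr[D(U_N)=1]|\le\varepsilon$ with $U_N$ uniform. Circuits are nonuniform. *)

theory Defs
  imports "HOL-Probability.Probability"
begin

definition bitstrings :: "nat \<Rightarrow> bool list set" where
  "bitstrings n = {z. length z = n}"

definition uniform_bits :: "nat \<Rightarrow> bool list pmf" where
  "uniform_bits n = pmf_of_set (bitstrings n)"

text \<open>A circuit is a list of gates (each gate may only read inputs, constants and
  earlier gates) together with a list of output wires.\<close>

datatype wire = Inp nat | Gt nat | Cst bool

datatype gate = AndG wire wire | OrG wire wire | NotG wire

type_synonym circuit = "gate list \<times> wire list"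

fun wire_val :: "bool list \<Rightarrow> bool list \<Rightarrow> wire \<Rightarrow> bool" where
  "wire_val inp vals (Inp k) = (if k < length inp then inp ! k else False)"
| "wire_val inp vals (Gt j) = (if j < length vals then vals ! j else False)"
| "wire_val inp vals (Cst b) = b"

fun gate_val :: "bool list \<Rightarrow> bool list \<Rightarrow> gate \<Rightarrow> bool" where
  "gate_val inp vals (AndG a b) = (wire_val inp vals a \<and> wire_val inp vals b)"
| "gate_val inp vals (OrG a b) = (wire_val inp vals a \<or> wire_val inp vals b)"
| "gate_val inp vals (NotG a) = (\<not> wire_val inp vals a)"

definition eval_gates :: "bool list \<Rightarrow> gate list \<Rightarrow> bool list" where
  "eval_gates inp gs = foldl (\<lambda>vals g. vals @ [gate_val inp vals g]) [] gs"

definition circ_eval :: "circuit \<Rightarrow> bool list \<Rightarrow> bool list" where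
  "circ_eval C inp = map (wire_val inp (eval_gates inp (fst C))) (snd C)"

definition circ_size :: "circuit \<Rightarrow> nat" where
  "circ_size C = length (fst C)"

definition distinguisher :: "circuit \<Rightarrow> bool" where
  "distinguisher D \<longleftrightarrow> length (snd D) = 1"

definition accepts :: "circuit \<Rightarrow> bool list \<Rightarrow> bool" where
  "accepts D z \<longleftrightarrow> hd (circ_eval D z)"

text \<open>Circuit size bounds are integers, so that a negative bound (e.g. T - m T0 < 0)
  admits no circuits.\<close>

definition small_distinguisher :: "int \<Rightarrow> circuit \<Rightarrow> bool" where
  "small_distinguisher s D \<longleftrightarrow> distinguisher D \<and> int (circ_size D) \<le> s"

definition pseudorandom :: "int \<Rightarrow> real \<Rightarrow> nat \<Rightarrow> bool list pmf \<Rightarrow> bool" where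
  "pseudorandom s \<epsilon> N Z \<longleftrightarrow>
     (\<forall>D. small_distinguisher s D \<longrightarrow>
        \<bar>measure_pmf.prob Z {z. accepts D z} - measure_pmf.prob (uniform_bits N) {z. accepts D z}\<bar> \<le> \<epsilon>)"

definition has_min_entropy :: "real \<Rightarrow> bool list pmf \<Rightarrow> bool" where
  "has_min_entropy \<alpha> X \<longleftrightarrow> (\<forall>x. pmf X x \<le> 2 powr (- \<alpha>))"

definition cond_min_entropy_ge :: "real \<Rightarrow> ('a \<times> bool list) pmf \<Rightarrow> bool" where
  "cond_min_entropy_ge \<alpha> P \<longleftrightarrow>
     (\<forall>v \<in> set_pmf (map_pmf fst P). \<forall>y. pmf P (v, y) \<le> 2 powr (- \<alpha>) * pmf (map_pmf fst P) v)"

text \<open>The sequence X_1..X_m is given as one joint distribution Xs on lists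
  (length m) of bit strings (length t). Index i (1-based in the paper) is
  list position i-1, so the prefix X_1..X_{i-1} is take (i-1), and X_i is position i-1.
  A circuit reads the tuple as the concatenation of its components.\<close>

definition joint_bits :: "nat \<Rightarrow> nat \<Rightarrow> bool list list pmf \<Rightarrow> bool" where
  "joint_bits m t Xs \<longleftrightarrow> (\<forall>xs \<in> set_pmf Xs. length xs = m \<and> (\<forall>x \<in> set xs. length x = t))"

definition cond_pseudo_min_entropy ::
  "nat \<Rightarrow> nat \<Rightarrow> bool list list pmf \<Rightarrow> int \<Rightarrow> real \<Rightarrow> real \<Rightarrow> bool" where
  "cond_pseudo_min_entropy m t Xs s \<epsilon> \<alpha> \<longleftrightarrow>
     (\<forall>i < m. \<exists>Y :: (bool list list \<times> bool list) pmf.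
        map_pmf fst Y = map_pmf (take i) Xs \<and>
        (\<forall>p \<in> set_pmf Y. length (snd p) = t) \<and>
        cond_min_entropy_ge \<alpha> Y \<and>
        (\<forall>D. small_distinguisher s D \<longrightarrow>
           \<bar>measure_pmf.prob Xs {xs. accepts D (concat (take i xs) @ xs ! i)}
            - measure_pmf.prob Y {p. accepts D (concat (fst p) @ snd p)}\<bar> \<le> \<epsilon>))"

definition within_sd :: "real \<Rightarrow> 'a pmf \<Rightarrow> 'a pmf \<Rightarrow> bool" where
  "within_sd \<epsilon> P Q \<longleftrightarrow> (\<forall>A. \<bar>measure_pmf.prob P A - measure_pmf.prob Q A\<bar> \<le> \<epsilon>)"

definition extractor_family ::
  "nat \<Rightarrow> nat \<Rightarrow> nat \<Rightarrow> real \<Rightarrow> real \<Rightarrow>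
   (bool list \<Rightarrow> bool list \<Rightarrow> bool list) pmf \<Rightarrow> bool" where
  "extractor_family t r l \<alpha> \<epsilon> H \<longleftrightarrow>
     (\<forall>h \<in> set_pmf H. \<forall>x \<rho>. length x = t \<longrightarrow> length \<rho> = r \<longrightarrow> length (h x \<rho>) = l) \<and>
     (\<forall>X. set_pmf X \<subseteq> bitstrings t \<longrightarrow> has_min_entropy \<alpha> X \<longrightarrow>
        within_sd \<epsilon>
          (map_pmf (\<lambda>(h, x, \<rho>). (h, h x \<rho>)) (pair_pmf H (pair_pmf X (uniform_bits r))))
          (pair_pmf H (uniform_bits l)))"

definition computes :: "circuit \<Rightarrow> nat \<Rightarrow> nat \<Rightarrow> (bool list \<Rightarrow> bool list \<Rightarrow> bool list) \<Rightarrow> bool" where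
  "computes C t r h \<longleftrightarrow>
     (\<forall>x \<rho>. length x = t \<longrightarrow> length \<rho> = r \<longrightarrow> circ_eval C (x @ \<rho>) = h x \<rho>)"

definition uniform_seeds :: "nat \<Rightarrow> nat \<Rightarrow> bool list list pmf" where
  "uniform_seeds m r = pmf_of_set {rs. length rs = m \<and> (\<forall>\<rho> \<in> set rs. length \<rho> = r)}"

definition extracted :: "(bool list \<Rightarrow> bool list \<Rightarrow> bool list) \<Rightarrow> bool list list pmf \<Rightarrow> nat \<Rightarrow> nat \<Rightarrow> bool list pmf" where
  "extracted h Xs m r = map_pmf (\<lambda>(xs, rs). concat (map2 h xs rs)) (pair_pmf Xs (uniform_seeds m r))"

end

theory Submission
  imports Defs
begin

fun valid_w :: "nat \<Rightarrow> wire \<Rightarrow> bool" where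
  "valid_w n (Gt g) = (g < n)"
| "valid_w n (Inp i) = True"
| "valid_w n (Cst b) = True"

fun tw :: "nat \<Rightarrow> nat \<Rightarrow> wire list \<Rightarrow> wire \<Rightarrow> wire" where
  "tw n k ins (Inp i) = (if i < length ins then ins ! i else Cst False)"
| "tw n k ins (Gt g) = (if g < k then Gt (n + g) else Cst False)"
| "tw n k ins (Cst b) = Cst b"

fun tg :: "nat \<Rightarrow> nat \<Rightarrow> wire list \<Rightarrow> gate \<Rightarrow> gate" where
  "tg n k ins (AndG a b) = AndG (tw n k ins a) (tw n k ins b)"
| "tg n k ins (OrG a b) = OrG (tw n k ins a) (tw n k ins b)"
| "tg n k ins (NotG a) = NotG (tw n k ins a)"

lemma valid_mono: "valid_w n w \<Longrightarrow> n \<le> n' \<Longrightarrow> valid_w n' w"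
  by (cases w) auto

lemma wire_ext: "valid_w (length vals) w \<Longrightarrow> wire_val inp (vals @ vs) w = wire_val inp vals w"
  by (cases w) (auto simp: nth_append)

lemma tw_val:
  assumes "length vals0 = n" "length vs \<le> k" "\<forall>w\<in>set ins. valid_w n w"
  shows "wire_val inp (vals0 @ vs) (tw n k ins w) = wire_val (map (wire_val inp vals0) ins) vs w"
  using assms by (cases w) (auto simp: nth_append wire_ext)

lemma tg_val:
  assumes "length vals0 = n" "length vs \<le> k" "\<forall>w\<in>set ins. valid_w n w"
  shows "gate_val inp (vals0 @ vs) (tg n k ins g) = gate_val (map (wire_val inp vals0) ins) vs g"
  using assms by (cases g) (auto simp: tw_val)

lemma eval_gates_snoc: "eval_gates inp (gs @ [g]) = eval_gates inp gs @ [gate_val inp (eval_gates inp gs) g]"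
  by (simp add: eval_gates_def)

lemma length_eval_gates[simp]: "length (eval_gates inp gs) = length gs"
  by (induction gs rule: rev_induct) (auto simp: eval_gates_snoc, simp add: eval_gates_def)

lemma eval_gates_Nil[simp]: "eval_gates inp [] = []"
  by (simp add: eval_gates_def)

lemma eval_app:
  assumes "length G = n" "length gs \<le> k" "\<forall>w\<in>set ins. valid_w n w"
  shows "eval_gates inp (G @ map (tg n k ins) gs) = eval_gates inp G @ eval_gates (map (wire_val inp (eval_gates inp G)) ins) gs"
  using assms
proof (induction gs rule: rev_induct)
  case Nil then show ?case by simp
next
  case (snoc g gs)
  then have IH: "eval_gates inp (G @ map (tg n k ins) gs) = eval_gates inp G @ eval_gates (map (wire_val inp (eval_gates inp G)) ins) gs"
    by simp
  show ?case
    using snoc.prems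
    by (simp add: eval_gates_snoc[of _ "G @ map (tg n k ins) gs", simplified] IH eval_gates_snoc tg_val)
qed

definition append_circ :: "gate list \<Rightarrow> circuit \<Rightarrow> wire list \<Rightarrow> gate list \<times> wire list" where
  "append_circ G C ins = (G @ map (tg (length G) (length (fst C)) ins) (fst C),
                          map (tw (length G) (length (fst C)) ins) (snd C))"

lemma tw_valid: "\<forall>w\<in>set ins. valid_w n w \<Longrightarrow> valid_w (n + k) (tw n k ins w)"
  by (cases w) (auto, meson nth_mem le_add1 valid_mono)

lemma append_circ:
  assumes "\<forall>w\<in>set ins. valid_w (length G) w"
  shows "eval_gates inp (fst (append_circ G C ins)) = eval_gates inp G @ eval_gates (map (wire_val inp (eval_gates inp G)) ins) (fst C)"
    and "map (wire_val inp (eval_gates inp (fst (append_circ G C ins)))) (snd (append_circ G C ins))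
         = circ_eval C (map (wire_val inp (eval_gates inp G)) ins)"
    and "\<forall>w\<in>set (snd (append_circ G C ins)). valid_w (length (fst (append_circ G C ins))) w"
    and "length (fst (append_circ G C ins)) = length G + circ_size C"
proof -
  show 1: "eval_gates inp (fst (append_circ G C ins)) = eval_gates inp G @ eval_gates (map (wire_val inp (eval_gates inp G)) ins) (fst C)"
    unfolding append_circ_def using assms by (simp add: eval_app)
  show "map (wire_val inp (eval_gates inp (fst (append_circ G C ins)))) (snd (append_circ G C ins))
         = circ_eval C (map (wire_val inp (eval_gates inp G)) ins)"
    unfolding 1 unfolding append_circ_def circ_eval_def using assms
    by (simp add: tw_val)
  show "\<forall>w\<in>set (snd (append_circ G C ins)). valid_w (length (fst (append_circ G C ins))) w"
    unfolding append_circ_def using assms by (auto intro: tw_valid)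
  show "length (fst (append_circ G C ins)) = length G + circ_size C"
    unfolding append_circ_def circ_size_def by simp
qed

fun build :: "gate list \<Rightarrow> (circuit \<times> wire list) list \<Rightarrow> gate list \<times> wire list" where
  "build G [] = (G, [])"
| "build G ((C, ins) # bs) =
     (let (G1, o1) = append_circ G C ins; (G2, o2) = build G1 bs in (G2, o1 @ o2))"

lemma valid0_ext: "valid_w 0 w \<Longrightarrow> wire_val inp vals w = wire_val inp [] w"
  by (cases w) auto

lemma build:
  assumes "\<forall>b\<in>set bs. \<forall>w\<in>set (snd b). valid_w 0 w"
  shows "(\<exists>ext. eval_gates inp (fst (build G bs)) = eval_gates inp G @ ext)
     \<and> map (wire_val inp (eval_gates inp (fst (build G bs)))) (snd (build G bs))
         = concat (map (\<lambda>b. circ_eval (fst b) (map (wire_val inp []) (snd b))) bs)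
     \<and> (\<forall>w\<in>set (snd (build G bs)). valid_w (length (fst (build G bs))) w)
     \<and> length (fst (build G bs)) = length G + sum_list (map (\<lambda>b. circ_size (fst b)) bs)"
  using assms
proof (induction bs arbitrary: G)
  case Nil then show ?case by simp
next
  case (Cons b bs)
  obtain C ins where b: "b = (C, ins)" by (cases b)
  have v0: "\<forall>w\<in>set ins. valid_w 0 w" using Cons.prems b by auto
  have vG: "\<forall>w\<in>set ins. valid_w (length G) w" using v0 valid_mono by blast
  have pr: "\<forall>b\<in>set bs. \<forall>w\<in>set (snd b). valid_w 0 w" using Cons.prems by simp
  define G1 where "G1 = fst (append_circ G C ins)"
  define o1 where "o1 = snd (append_circ G C ins)"
  have ac: "append_circ G C ins = (G1, o1)" by (simp add: G1_def o1_def)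
  note A = append_circ[OF vG, where C=C, folded G1_def o1_def]
  have IH: "(\<exists>ext. eval_gates inp (fst (build G1 bs)) = eval_gates inp G1 @ ext)
     \<and> map (wire_val inp (eval_gates inp (fst (build G1 bs)))) (snd (build G1 bs))
         = concat (map (\<lambda>b. circ_eval (fst b) (map (wire_val inp []) (snd b))) bs)
     \<and> (\<forall>w\<in>set (snd (build G1 bs)). valid_w (length (fst (build G1 bs))) w)
     \<and> length (fst (build G1 bs)) = length G1 + sum_list (map (\<lambda>b. circ_size (fst b)) bs)"
    using Cons.IH[where G=G1, OF pr] .
  from conjunct1[OF IH] obtain ext where ext: "eval_gates inp (fst (build G1 bs)) = eval_gates inp G1 @ ext" ..
  have ins_eq: "map (wire_val inp (eval_gates inp G)) ins = map (wire_val inp []) ins"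
    using v0 by (intro map_cong[OF refl] valid0_ext) blast
  have o1v: "map (wire_val inp (eval_gates inp (fst (build G1 bs)))) o1 = map (wire_val inp (eval_gates inp G1)) o1"
    unfolding ext
  proof (rule map_cong[OF refl])
    fix w assume "w \<in> set o1"
    hence "valid_w (length (eval_gates inp G1)) w" using A(3) by simp
    thus "wire_val inp (eval_gates inp G1 @ ext) w = wire_val inp (eval_gates inp G1) w" by (rule wire_ext)
  qed
  have bd: "build G (b # bs) = (fst (build G1 bs), o1 @ snd (build G1 bs))"
    unfolding b build.simps ac Let_def by (simp add: case_prod_beta)
  have e1: "\<exists>ext. eval_gates inp (fst (build G (b # bs))) = eval_gates inp G @ ext"
  proof
    show "eval_gates inp (fst (build G (b # bs))) = eval_gates inp G @ (eval_gates (map (wire_val inp (eval_gates inp G)) ins) (fst C) @ ext)"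
      unfolding bd fst_conv ext A(1) by simp
  qed
  have e2: "map (wire_val inp (eval_gates inp (fst (build G (b # bs))))) (snd (build G (b # bs)))
         = concat (map (\<lambda>b. circ_eval (fst b) (map (wire_val inp []) (snd b))) (b # bs))"
  proof -
    have "map (wire_val inp (eval_gates inp (fst (build G (b # bs))))) (snd (build G (b # bs)))
      = map (wire_val inp (eval_gates inp (fst (build G1 bs)))) o1 @ map (wire_val inp (eval_gates inp (fst (build G1 bs)))) (snd (build G1 bs))"
      unfolding bd by simp
    also have "\<dots> = circ_eval C (map (wire_val inp []) ins) @ concat (map (\<lambda>b. circ_eval (fst b) (map (wire_val inp []) (snd b))) bs)"
      using IH o1v A(2) ins_eq by simp
    finally show ?thesis using b by simp
  qed
  have lenG1: "length G1 \<le> length (fst (build G1 bs))" using IH by simp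
  have e3: "\<forall>w\<in>set (snd (build G (b # bs))). valid_w (length (fst (build G (b # bs)))) w"
  proof
    fix w assume "w \<in> set (snd (build G (b # bs)))"
    then have "w \<in> set o1 \<or> w \<in> set (snd (build G1 bs))" unfolding bd by simp
    then show "valid_w (length (fst (build G (b # bs)))) w"
    proof
      assume "w \<in> set o1"
      then have "valid_w (length G1) w" using A(3) by blast
      then show ?thesis unfolding bd fst_conv using lenG1 valid_mono by blast
    next
      assume "w \<in> set (snd (build G1 bs))"
      then show ?thesis unfolding bd fst_conv using IH by blast
    qed
  qed
  have e4: "length (fst (build G (b # bs))) = length G + sum_list (map (\<lambda>b. circ_size (fst b)) (b # bs))"
    unfolding bd using IH A(4) b by simp
  show ?case using e1 e2 e3 e4 by blast
qed

definition compose_c :: "circuit \<Rightarrow> (circuit \<times> wire list) list \<Rightarrow> wire list \<Rightarrow> circuit" where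
  "compose_c D bs extra = (let (GE, outs) = build [] bs in append_circ GE D (outs @ extra))"

lemma compose_c:
  assumes "\<forall>b\<in>set bs. \<forall>w\<in>set (snd b). valid_w 0 w" "\<forall>w\<in>set extra. valid_w 0 w"
  shows "circ_eval (compose_c D bs extra) inp =
           circ_eval D (concat (map (\<lambda>b. circ_eval (fst b) (map (wire_val inp []) (snd b))) bs) @ map (wire_val inp []) extra)"
    and "circ_size (compose_c D bs extra) = circ_size D + sum_list (map (\<lambda>b. circ_size (fst b)) bs)"
    and "length (snd (compose_c D bs extra)) = length (snd D)"
proof -
  define GE where "GE = fst (build [] bs)"
  define outs where "outs = snd (build [] bs)"
  have be: "build [] bs = (GE, outs)" by (simp add: GE_def outs_def)
  have B: "(\<exists>ext. eval_gates inp GE = eval_gates inp [] @ ext)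
     \<and> map (wire_val inp (eval_gates inp GE)) outs
         = concat (map (\<lambda>b. circ_eval (fst b) (map (wire_val inp []) (snd b))) bs)
     \<and> (\<forall>w\<in>set outs. valid_w (length GE) w)
     \<and> length GE = length ([]::gate list) + sum_list (map (\<lambda>b. circ_size (fst b)) bs)"
    using build[OF assms(1), where inp=inp and G="[]", folded GE_def outs_def] by blast
  have v: "\<forall>w\<in>set (outs @ extra). valid_w (length GE) w"
  proof
    fix w assume "w \<in> set (outs @ extra)"
    then show "valid_w (length GE) w"
      using B assms(2) valid_mono[of 0 w "length GE"] by auto
  qed
  note A = append_circ[OF v, where C=D]
  have c: "compose_c D bs extra = append_circ GE D (outs @ extra)"
    by (simp add: compose_c_def be)
  have ex: "map (wire_val inp (eval_gates inp GE)) extra = map (wire_val inp []) extra"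
    using assms(2) by (intro map_cong[OF refl] valid0_ext) blast
  show "circ_eval (compose_c D bs extra) inp =
           circ_eval D (concat (map (\<lambda>b. circ_eval (fst b) (map (wire_val inp []) (snd b))) bs) @ map (wire_val inp []) extra)"
    using A(2)[where inp=inp] B ex unfolding c by (simp add: circ_eval_def)
  show "circ_size (compose_c D bs extra) = circ_size D + sum_list (map (\<lambda>b. circ_size (fst b)) bs)"
    using A(4) B unfolding c by (simp add: circ_size_def)
  show "length (snd (compose_c D bs extra)) = length (snd D)"
    unfolding c append_circ_def by simp
qed

lemma length_concat_const: "(\<forall>w\<in>set ws. length w = t) \<Longrightarrow> length (concat ws) = length ws * t"
  by (induction ws) auto

lemma concat_nth_block:
  assumes "\<forall>w\<in>set ws. length w = t" "k < length ws" "i < t"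
  shows "concat ws ! (k * t + i) = ws ! k ! i"
  using assms
proof (induction ws arbitrary: k)
  case Nil then show ?case by simp
next
  case (Cons w ws)
  show ?case
  proof (cases k)
    case 0 then show ?thesis using Cons.prems by (simp add: nth_append)
  next
    case (Suc k')
    have "concat (w # ws) ! (k * t + i) = concat ws ! (k' * t + i)"
      using Cons.prems Suc by (simp add: nth_append algebra_simps)
    also have "\<dots> = ws ! k' ! i" using Cons Suc by simp
    finally show ?thesis using Suc by simp
  qed
qed

lemma block_extract:
  assumes "\<forall>w\<in>set ws. length w = t" "k < length ws"
  shows "map (\<lambda>i. wire_val (concat ws) [] (Inp (k * t + i))) [0..<t] = ws ! k"
proof (rule nth_equalityI)
  show "length (map (\<lambda>i. wire_val (concat ws) [] (Inp (k * t + i))) [0..<t]) = length (ws ! k)"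
    using assms by simp
next
  fix i assume "i < length (map (\<lambda>i. wire_val (concat ws) [] (Inp (k * t + i))) [0..<t])"
  then have i: "i < t" by simp
  have "k * t + i < length ws * t"
  proof -
    have "k * t + i < k * t + t" using i by simp
    also have "\<dots> = Suc k * t" by simp
    also have "\<dots> \<le> length ws * t" using assms(2) by (intro mult_le_mono1) simp
    finally show ?thesis .
  qed
  then show "map (\<lambda>i. wire_val (concat ws) [] (Inp (k * t + i))) [0..<t] ! i = ws ! k ! i"
    using i assms concat_nth_block[OF assms(1,2) i] length_concat_const[OF assms(1)] by simp
qed

definition dprime :: "circuit \<Rightarrow> circuit \<Rightarrow> nat \<Rightarrow> bool list list \<Rightarrow> bool list \<Rightarrow> circuit" where
  "dprime D C t \<rho>s u' = compose_c D (map (\<lambda>k. (C, map (\<lambda>i. Inp (k * t + i)) [0..<t] @ map Cst (\<rho>s ! k))) [0..<length \<rho>s]) (map Cst u')"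

lemma map2_as_map: "length xs = length ys \<Longrightarrow> map2 f xs ys = map (\<lambda>k. f (xs ! k) (ys ! k)) [0..<length xs]"
  by (rule nth_equalityI) auto

lemma dprime:
  assumes "computes C t r h" "\<forall>\<rho>\<in>set \<rho>s. length \<rho> = r"
  shows "circ_size (dprime D C t \<rho>s u') = circ_size D + length \<rho>s * circ_size C"
    and "distinguisher (dprime D C t \<rho>s u') = distinguisher D"
    and "length ws = length \<rho>s \<Longrightarrow> \<forall>w\<in>set ws. length w = t \<Longrightarrow>
         circ_eval (dprime D C t \<rho>s u') (concat ws) = circ_eval D (concat (map2 h ws \<rho>s) @ u')"
proof -
  let ?bs = "map (\<lambda>k. (C, map (\<lambda>i. Inp (k * t + i)) [0..<t] @ map Cst (\<rho>s ! k))) [0..<length \<rho>s]"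
  have v1: "\<forall>b\<in>set ?bs. \<forall>w\<in>set (snd b). valid_w 0 w" by auto
  have v2: "\<forall>w\<in>set (map Cst u'). valid_w 0 w" by auto
  note cp = compose_c[OF v1 v2]
  show "circ_size (dprime D C t \<rho>s u') = circ_size D + length \<rho>s * circ_size C"
    unfolding dprime_def cp(2) by (simp add: comp_def sum_list_triv)
  show "distinguisher (dprime D C t \<rho>s u') = distinguisher D"
    unfolding dprime_def distinguisher_def cp(3) ..
  assume len: "length ws = length \<rho>s" and lw: "\<forall>w\<in>set ws. length w = t"
  have blocks: "map (\<lambda>b. circ_eval (fst b) (map (wire_val (concat ws) []) (snd b))) ?bs
      = map (\<lambda>k. h (ws ! k) (\<rho>s ! k)) [0..<length ws]"
  proof -
    have "map (\<lambda>b. circ_eval (fst b) (map (wire_val (concat ws) []) (snd b))) ?bs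
       = map (\<lambda>k. circ_eval C (map (wire_val (concat ws) []) (map (\<lambda>i. Inp (k * t + i)) [0..<t] @ map Cst (\<rho>s ! k)))) [0..<length ws]"
      using len by simp
    also have "\<dots> = map (\<lambda>k. h (ws ! k) (\<rho>s ! k)) [0..<length ws]"
    proof (rule map_cong[OF refl])
      fix k assume "k \<in> set [0..<length ws]"
      then have k: "k < length ws" by simp
      have "map (wire_val (concat ws) []) (map (\<lambda>i. Inp (k * t + i)) [0..<t] @ map Cst (\<rho>s ! k))
          = ws ! k @ \<rho>s ! k"
        using block_extract[OF lw k] by (simp add: comp_def)
      moreover have "length (ws ! k) = t" using lw k by simp
      moreover have "length (\<rho>s ! k) = r" using assms(2) k len by simp
      ultimately show "circ_eval C (map (wire_val (concat ws) []) (map (\<lambda>i. Inp (k * t + i)) [0..<t] @ map Cst (\<rho>s ! k))) = h (ws ! k) (\<rho>s ! k)"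
        using assms(1) unfolding computes_def by simp
    qed
    finally show ?thesis .
  qed
  have ex: "map (wire_val (concat ws) []) (map Cst u') = u'" by (induction u') auto
  show "circ_eval (dprime D C t \<rho>s u') (concat ws) = circ_eval D (concat (map2 h ws \<rho>s) @ u')"
    unfolding dprime_def cp(1) blocks ex map2_as_map[OF len] ..
qed


lemma expectation_bind_pmf:
  fixes f :: "'b \<Rightarrow> real"
  assumes "\<And>x. \<bar>f x\<bar> \<le> B"
  shows "measure_pmf.expectation (bind_pmf M N) f = measure_pmf.expectation M (\<lambda>x. measure_pmf.expectation (N x) f)"
  unfolding measure_pmf_bind
  by (rule integral_bind[where K="count_space UNIV" and B=B and B'=1])
     (auto simp: assms measure_pmf_in_subprob_algebra measure_pmf.subprob_emeasure_le_1 prob_space_imp_subprob_space intro: measure_pmf.finite_measure_axioms)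

lemma expectation_pair_pmf:
  fixes f :: "'a \<times> 'b \<Rightarrow> real"
  assumes "\<And>x. \<bar>f x\<bar> \<le> B"
  shows "measure_pmf.expectation (pair_pmf A C) f = measure_pmf.expectation A (\<lambda>a. measure_pmf.expectation C (\<lambda>c. f (a, c)))"
  unfolding pair_pmf_def
  apply (subst expectation_bind_pmf[where B=B])
   apply (rule assms)
  apply (subst expectation_bind_pmf[where B=B])
   apply (rule assms)
  apply simp
  done

lemma prob_as_expectation:
  "measure_pmf.prob P S = measure_pmf.expectation P (indicator S :: _ \<Rightarrow> real)"
  by simp

lemma prob_pair1:
  "measure_pmf.prob (pair_pmf A C) S = measure_pmf.expectation A (\<lambda>a. measure_pmf.prob C {c. (a, c) \<in> S})"
proof -
  have "measure_pmf.prob (pair_pmf A C) S = measure_pmf.expectation (pair_pmf A C) (indicator S :: _ \<Rightarrow> real)"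
    by simp
  also have "\<dots> = measure_pmf.expectation A (\<lambda>a. measure_pmf.expectation C (\<lambda>c. indicator S (a, c) :: real))"
    by (rule expectation_pair_pmf[where B=1]) (simp add: indicator_def)
  also have "\<dots> = measure_pmf.expectation A (\<lambda>a. measure_pmf.prob C {c. (a, c) \<in> S})"
  proof -
    have "\<And>a. (\<lambda>c. indicator S (a, c) :: real) = indicator {c. (a, c) \<in> S}"
      by (auto simp: indicator_def)
    then show ?thesis by simp
  qed
  finally show ?thesis .
qed

lemma prob_pair2:
  "measure_pmf.prob (pair_pmf A C) S = measure_pmf.expectation C (\<lambda>c. measure_pmf.prob A {a. (a, c) \<in> S})"
proof -
  have "measure_pmf.prob (pair_pmf A C) S = measure_pmf.prob (pair_pmf C A) ((\<lambda>(x, y). (y, x)) -` S)"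
    by (subst pair_commute_pmf) simp
  also have "\<dots> = measure_pmf.expectation C (\<lambda>c. measure_pmf.prob A {a. (a, c) \<in> S})"
    by (subst prob_pair1) simp
  finally show ?thesis .
qed

lemma integrable_bounded_pmf:
  fixes f :: "'a \<Rightarrow> real"
  assumes "\<And>x. \<bar>f x\<bar> \<le> B"
  shows "integrable (measure_pmf P) f"
  by (rule measure_pmf.integrable_const_bound[where B=B]) (auto simp: assms)

lemma pair_pmf_of_set:
  assumes "finite A" "A \<noteq> {}" "finite B" "B \<noteq> {}"
  shows "pair_pmf (pmf_of_set A) (pmf_of_set B) = pmf_of_set (A \<times> B)"
  by (rule pmf_eqI) (auto simp: pmf_pair assms card_cartesian_product indicator_def)

lemma finite_bitstrings: "finite (bitstrings n)"
proof -
  have "bitstrings n = {xs. set xs \<subseteq> UNIV \<and> length xs = n}" unfolding bitstrings_def by auto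
  then show ?thesis using finite_lists_length_eq[of "UNIV :: bool set" n] by simp
qed

lemma bitstrings_ne: "bitstrings n \<noteq> {}"
  unfolding bitstrings_def by (auto intro: exI[of _ "replicate n False"])

lemma set_uniform_bits[simp]: "set_pmf (uniform_bits n) = bitstrings n"
  unfolding uniform_bits_def using finite_bitstrings bitstrings_ne by simp

lemma uniform_bits_add:
  "uniform_bits (a + b) = map_pmf (\<lambda>(x, y). x @ y) (pair_pmf (uniform_bits a) (uniform_bits b))"
proof -
  have inj: "inj_on (\<lambda>(x, y). x @ y) (bitstrings a \<times> bitstrings b)"
    by (auto simp: inj_on_def bitstrings_def)
  have img: "(\<lambda>(x, y). x @ y) ` (bitstrings a \<times> bitstrings b) = bitstrings (a + b)"
  proof
    show "(\<lambda>(x, y). x @ y) ` (bitstrings a \<times> bitstrings b) \<subseteq> bitstrings (a + b)"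
      by (auto simp: bitstrings_def)
    show "bitstrings (a + b) \<subseteq> (\<lambda>(x, y). x @ y) ` (bitstrings a \<times> bitstrings b)"
    proof
      fix z assume "z \<in> bitstrings (a + b)"
      then have "z = (\<lambda>(x, y). x @ y) (take a z, drop a z)" "(take a z, drop a z) \<in> bitstrings a \<times> bitstrings b"
        by (auto simp: bitstrings_def)
      then show "z \<in> (\<lambda>(x, y). x @ y) ` (bitstrings a \<times> bitstrings b)" by blast
    qed
  qed
  show ?thesis
    unfolding uniform_bits_def
    by (simp add: pair_pmf_of_set finite_bitstrings bitstrings_ne map_pmf_of_set_inj[OF inj] img)
qed

definition seedset :: "nat \<Rightarrow> nat \<Rightarrow> bool list list set" where
  "seedset m r = {rs. length rs = m \<and> (\<forall>\<rho> \<in> set rs. length \<rho> = r)}"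

lemma finite_seedset: "finite (seedset m r)"
proof -
  have "seedset m r = {xs. set xs \<subseteq> bitstrings r \<and> length xs = m}" unfolding seedset_def bitstrings_def by auto
  then show ?thesis using finite_lists_length_eq[OF finite_bitstrings] by simp
qed

lemma seedset_ne: "seedset m r \<noteq> {}"
  unfolding seedset_def by (auto intro!: exI[of _ "replicate m (replicate r False)"])

lemma set_uniform_seeds[simp]: "set_pmf (uniform_seeds m r) = seedset m r"
  unfolding uniform_seeds_def seedset_def[symmetric] using finite_seedset seedset_ne by simp

lemma uniform_seeds_Suc:
  "uniform_seeds (Suc j) r = map_pmf (\<lambda>(rs, \<rho>). rs @ [\<rho>]) (pair_pmf (uniform_seeds j r) (uniform_bits r))"
proof -
  have inj: "inj_on (\<lambda>(rs, \<rho>). rs @ [\<rho>]) (seedset j r \<times> bitstrings r)"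
    by (auto simp: inj_on_def)
  have img: "(\<lambda>(rs, \<rho>). rs @ [\<rho>]) ` (seedset j r \<times> bitstrings r) = seedset (Suc j) r"
  proof
    show "(\<lambda>(rs, \<rho>). rs @ [\<rho>]) ` (seedset j r \<times> bitstrings r) \<subseteq> seedset (Suc j) r"
      by (auto simp: bitstrings_def seedset_def)
    show "seedset (Suc j) r \<subseteq> (\<lambda>(rs, \<rho>). rs @ [\<rho>]) ` (seedset j r \<times> bitstrings r)"
    proof
      fix z assume z: "z \<in> seedset (Suc j) r"
      then have "z \<noteq> []" by (auto simp: seedset_def)
      then have "z = (\<lambda>(rs, \<rho>). rs @ [\<rho>]) (butlast z, last z)" by simp
      moreover have "(butlast z, last z) \<in> seedset j r \<times> bitstrings r"
        using z \<open>z \<noteq> []\<close> by (auto simp: seedset_def bitstrings_def dest: in_set_butlastD)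
      ultimately show "z \<in> (\<lambda>(rs, \<rho>). rs @ [\<rho>]) ` (seedset j r \<times> bitstrings r)" by blast
    qed
  qed
  show ?thesis
    unfolding uniform_seeds_def uniform_bits_def seedset_def[symmetric]
    by (simp add: pair_pmf_of_set finite_bitstrings bitstrings_ne finite_seedset seedset_ne map_pmf_of_set_inj[OF inj] img)
qed

lemma uniform_seeds_0: "uniform_seeds 0 r = return_pmf []"
proof -
  have e: "{rs. length rs = 0 \<and> (\<forall>\<rho> \<in> set rs. length \<rho> = r)} = {[]}" by auto
  show ?thesis unfolding uniform_seeds_def e by (rule pmf_of_set_singleton)
qed

lemma uniform_bits_0: "uniform_bits 0 = return_pmf []"
  unfolding uniform_bits_def bitstrings_def by (simp add: pmf_of_set_singleton[symmetric])


abbreviation PR where "PR \<equiv> measure_pmf.prob"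
abbreviation EXP where "EXP \<equiv> measure_pmf.expectation"

lemma prob_cong_supp:
  assumes "\<And>x. x \<in> set_pmf p \<Longrightarrow> x \<in> A \<longleftrightarrow> x \<in> B"
  shows "PR p A = PR p B"
proof -
  have "A \<inter> set_pmf p = B \<inter> set_pmf p" using assms by auto
  then show ?thesis by (metis measure_Int_set_pmf)
qed

lemma EX_cong_supp:
  fixes f g :: "'a \<Rightarrow> real"
  assumes "\<And>x. x \<in> set_pmf p \<Longrightarrow> f x = g x"
  shows "EXP p f = EXP p g"
  by (rule integral_cong_AE) (auto simp: AE_measure_pmf_iff assms)

lemma EX_bound:
  fixes f :: "'a \<Rightarrow> real"
  assumes "\<And>x. \<bar>f x\<bar> \<le> B"
  shows "\<bar>EXP p f\<bar> \<le> B"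
proof -
  have i: "integrable (measure_pmf p) f" by (rule integrable_bounded_pmf[OF assms])
  have "EXP p f \<le> B"
    using assms by (intro measure_pmf.integral_le_const[OF i]) (auto simp: abs_le_iff)
  moreover have "-B \<le> EXP p f"
  proof (intro measure_pmf.integral_ge_const[OF i] AE_I2)
    fix x show "-B \<le> f x" using assms[of x] by linarith
  qed
  ultimately show ?thesis by auto
qed

lemma prob_abs_le1: "\<bar>PR p S\<bar> \<le> 1"
  by simp

lemma abs_EX_diff_le:
  fixes f g :: "'a \<Rightarrow> real"
  assumes "\<And>x. \<bar>f x\<bar> \<le> B" "\<And>x. \<bar>g x\<bar> \<le> B" "\<And>x. x \<in> set_pmf p \<Longrightarrow> \<bar>f x - g x\<bar> \<le> c"
  shows "\<bar>EXP p f - EXP p g\<bar> \<le> c"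
proof -
  have i1: "integrable (measure_pmf p) f" by (rule integrable_bounded_pmf[OF assms(1)])
  have i2: "integrable (measure_pmf p) g" by (rule integrable_bounded_pmf[OF assms(2)])
  have i: "integrable (measure_pmf p) (\<lambda>x. f x - g x)" using i1 i2 by simp
  have e: "EXP p f - EXP p g = EXP p (\<lambda>x. f x - g x)" using i1 i2 by simp
  have "EXP p (\<lambda>x. f x - g x) \<le> c"
    using assms(3) by (intro measure_pmf.integral_le_const[OF i]) (auto simp: AE_measure_pmf_iff abs_le_iff)
  moreover have "-c \<le> EXP p (\<lambda>x. f x - g x)"
  proof (intro measure_pmf.integral_ge_const[OF i])
    show "AE x in measure_pmf p. - c \<le> f x - g x"
      unfolding AE_measure_pmf_iff
    proof
      fix x assume "x \<in> set_pmf p" then show "- c \<le> f x - g x" using assms(3)[of x] by linarith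
    qed
  qed
  ultimately show ?thesis unfolding e by auto
qed

lemma expectation_pair_pmf2:
  fixes f :: "'a \<times> 'b \<Rightarrow> real"
  assumes "\<And>x. \<bar>f x\<bar> \<le> B"
  shows "EXP (pair_pmf A C) f = EXP C (\<lambda>c. EXP A (\<lambda>a. f (a, c)))"
proof -
  have "EXP (pair_pmf A C) f = EXP (pair_pmf C A) (\<lambda>x. f (snd x, fst x))"
    by (subst pair_commute_pmf) (simp add: case_prod_beta)
  also have "\<dots> = EXP C (\<lambda>c. EXP A (\<lambda>a. f (a, c)))"
    by (subst expectation_pair_pmf[where B=B]) (simp_all add: assms)
  finally show ?thesis .
qed

lemma EX_swap:
  fixes f :: "'a \<Rightarrow> 'b \<Rightarrow> real"
  assumes "\<And>a c. \<bar>f a c\<bar> \<le> B"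
  shows "EXP A (\<lambda>a. EXP C (\<lambda>c. f a c)) = EXP C (\<lambda>c. EXP A (\<lambda>a. f a c))"
proof -
  have "EXP A (\<lambda>a. EXP C (\<lambda>c. f a c)) = EXP (pair_pmf A C) (\<lambda>x. f (fst x) (snd x))"
    by (subst expectation_pair_pmf[where B=B]) (simp_all add: assms)
  also have "\<dots> = EXP C (\<lambda>c. EXP A (\<lambda>a. f a c))"
    by (subst expectation_pair_pmf2[where B=B]) (simp_all add: assms)
  finally show ?thesis .
qed

lemma sum_pos_part:
  fixes f :: "'a \<Rightarrow> real"
  assumes "finite F"
  shows "sum f (F \<inter> S) \<le> sum f (F \<inter> {x. 0 < f x})"
proof -
  have "sum f (F \<inter> S) \<le> sum (\<lambda>x. max (f x) 0) (F \<inter> S)"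
    by (rule sum_mono) simp
  also have "\<dots> \<le> sum (\<lambda>x. max (f x) 0) F"
    using assms by (intro sum_mono2) auto
  also have "\<dots> = sum (\<lambda>x. max (f x) 0) (F \<inter> {x. 0 < f x})"
    using assms by (intro sum.mono_neutral_right) auto
  also have "\<dots> = sum f (F \<inter> {x. 0 < f x})"
    by (rule sum.cong) auto
  finally show ?thesis .
qed

lemma hahn_one:
  assumes "finite (set_pmf P)" "finite (set_pmf Q)"
  shows "PR P S - PR Q S \<le> PR P {x. pmf Q x < pmf P x} - PR Q {x. pmf Q x < pmf P x}"
proof -
  define F where "F = set_pmf P \<union> set_pmf Q"
  have fF: "finite F" using assms by (simp add: F_def)
  have pr: "PR R A = sum (pmf R) (F \<inter> A)" if "R = P \<or> R = Q" for R A
  proof -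
    have "PR R A = PR R (F \<inter> A)" by (rule prob_cong_supp) (use that in \<open>auto simp: F_def\<close>)
    also have "\<dots> = sum (pmf R) (F \<inter> A)" using fF by (simp add: measure_measure_pmf_finite)
    finally show ?thesis .
  qed
  have "PR P S - PR Q S = sum (\<lambda>x. pmf P x - pmf Q x) (F \<inter> S)"
    by (simp add: pr sum_subtractf)
  also have "\<dots> \<le> sum (\<lambda>x. pmf P x - pmf Q x) (F \<inter> {x. 0 < pmf P x - pmf Q x})"
    by (rule sum_pos_part[OF fF])
  also have "\<dots> = PR P {x. pmf Q x < pmf P x} - PR Q {x. pmf Q x < pmf P x}"
    by (simp add: pr sum_subtractf)
  finally show ?thesis .
qed

lemma hahn:
  assumes "finite (set_pmf P)" "finite (set_pmf Q)"
  shows "\<bar>PR P S - PR Q S\<bar> \<le> PR P {x. pmf Q x < pmf P x} - PR Q {x. pmf Q x < pmf P x}"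
proof -
  have a: "PR P S - PR Q S \<le> PR P {x. pmf Q x < pmf P x} - PR Q {x. pmf Q x < pmf P x}"
    by (rule hahn_one[OF assms])
  have b: "PR P (-S) - PR Q (-S) \<le> PR P {x. pmf Q x < pmf P x} - PR Q {x. pmf Q x < pmf P x}"
    by (rule hahn_one[OF assms])
  have "PR P (-S) = 1 - PR P S" "PR Q (-S) = 1 - PR Q S"
    using measure_pmf.prob_compl[of S] by (auto simp: Compl_eq_Diff_UNIV)
  then show ?thesis using a b by auto
qed

lemma telescope:
  fixes f :: "nat \<Rightarrow> real"
  shows "\<bar>f n - f 0\<bar> \<le> (\<Sum>j<n. \<bar>f (Suc j) - f j\<bar>)"
proof (induction n)
  case 0 then show ?case by simp
next
  case (Suc n)
  have "\<bar>f (Suc n) - f 0\<bar> \<le> \<bar>f (Suc n) - f n\<bar> + \<bar>f n - f 0\<bar>" by simp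
  then show ?case using Suc by simp
qed


definition hyb :: "bool list list pmf \<Rightarrow> nat \<Rightarrow> nat \<Rightarrow> nat \<Rightarrow> (bool list \<Rightarrow> bool list \<Rightarrow> bool list) \<Rightarrow> circuit \<Rightarrow> nat \<Rightarrow> real" where
  "hyb Xs m r l h D j = PR (pair_pmf (pair_pmf Xs (uniform_seeds j r)) (uniform_bits ((m - j) * l)))
      {((xs, rs), u). accepts D (concat (map2 h (take j xs) rs) @ u)}"

lemma hyb_0: "hyb Xs m r l h D 0 = PR (uniform_bits (m * l)) {z. accepts D z}"
proof -
  have "{((xs, rs), u). accepts D (concat (map2 h (take 0 xs) rs) @ u)} = snd -` {z. accepts D z}"
    by auto
  then have "hyb Xs m r l h D 0 = PR (map_pmf snd (pair_pmf (pair_pmf Xs (uniform_seeds 0 r)) (uniform_bits (m * l)))) {z. accepts D z}"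
    unfolding hyb_def by simp
  then show ?thesis by (simp add: map_snd_pair_pmf)
qed

lemma hyb_m:
  assumes "\<forall>xs\<in>set_pmf Xs. length xs = m"
  shows "hyb Xs m r l h D m = PR (extracted h Xs m r) {z. accepts D z}"
proof -
  have "hyb Xs m r l h D m = EXP (return_pmf []) (\<lambda>u. PR (pair_pmf Xs (uniform_seeds m r))
        {a. (a, u) \<in> {((xs, rs), u). accepts D (concat (map2 h (take m xs) rs) @ u)}})"
    unfolding hyb_def by (simp add: prob_pair2 uniform_bits_0)
  also have "\<dots> = PR (pair_pmf Xs (uniform_seeds m r)) {(xs, rs). accepts D (concat (map2 h (take m xs) rs))}"
    by (simp add: case_prod_beta, intro arg_cong[where f="measure_pmf.prob _"]) auto
  also have "\<dots> = PR (pair_pmf Xs (uniform_seeds m r)) ((\<lambda>(xs, rs). concat (map2 h xs rs)) -` {z. accepts D z})"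
    by (rule prob_cong_supp) (use assms in auto)
  also have "\<dots> = PR (extracted h Xs m r) {z. accepts D z}"
    unfolding extracted_def by simp
  finally show ?thesis .
qed

lemma map2_snoc: "length a = length rs \<Longrightarrow> map2 h (a @ [x]) (rs @ [\<rho>]) = map2 h a rs @ [h x \<rho>]"
  by simp

lemma hyb_Suc:
  assumes "j < m" "\<forall>xs\<in>set_pmf Xs. length xs = m"
  shows "hyb Xs m r l h D (Suc j) = EXP (uniform_bits ((m - Suc j) * l)) (\<lambda>u'. EXP (uniform_seeds j r) (\<lambda>rs.
          EXP (uniform_bits r) (\<lambda>\<rho>. PR Xs {xs. accepts D (concat (map2 h (take j xs) rs) @ h (xs ! j) \<rho> @ u')})))"
proof -
  have "hyb Xs m r l h D (Suc j) = EXP (uniform_bits ((m - Suc j) * l)) (\<lambda>u'.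
          PR (pair_pmf Xs (uniform_seeds (Suc j) r)) {(xs, rs). accepts D (concat (map2 h (take (Suc j) xs) rs) @ u')})"
    unfolding hyb_def by (simp add: prob_pair2 case_prod_beta)
  also have "\<dots> = EXP (uniform_bits ((m - Suc j) * l)) (\<lambda>u'.
          EXP (uniform_seeds (Suc j) r) (\<lambda>rs. PR Xs {xs. accepts D (concat (map2 h (take (Suc j) xs) rs) @ u')}))"
    by (simp add: prob_pair2 case_prod_beta)
  also have "\<dots> = EXP (uniform_bits ((m - Suc j) * l)) (\<lambda>u'.
          EXP (uniform_seeds j r) (\<lambda>rs. EXP (uniform_bits r) (\<lambda>\<rho>. PR Xs {xs. accepts D (concat (map2 h (take (Suc j) xs) (rs @ [\<rho>])) @ u')})))"
    unfolding uniform_seeds_Suc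
    by (simp add: case_prod_beta expectation_pair_pmf[where B=1])
  also have "\<dots> = EXP (uniform_bits ((m - Suc j) * l)) (\<lambda>u'. EXP (uniform_seeds j r) (\<lambda>rs.
          EXP (uniform_bits r) (\<lambda>\<rho>. PR Xs {xs. accepts D (concat (map2 h (take j xs) rs) @ h (xs ! j) \<rho> @ u')})))"
  proof (intro EX_cong_supp)
    fix u' rs \<rho> assume rs: "rs \<in> set_pmf (uniform_seeds j r)"
    show "PR Xs {xs. accepts D (concat (map2 h (take (Suc j) xs) (rs @ [\<rho>])) @ u')}
        = PR Xs {xs. accepts D (concat (map2 h (take j xs) rs) @ h (xs ! j) \<rho> @ u')}"
    proof (rule prob_cong_supp)
      fix xs assume "xs \<in> set_pmf Xs"
      then have lx: "j < length xs" using assms by auto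
      have lr: "length rs = j" using rs by (simp add: seedset_def)
      have "take (Suc j) xs = take j xs @ [xs ! j]" using lx by (simp add: take_Suc_conv_app_nth)
      then have "map2 h (take (Suc j) xs) (rs @ [\<rho>]) = map2 h (take j xs) rs @ [h (xs ! j) \<rho>]"
        using lx lr by simp
      then show "xs \<in> {xs. accepts D (concat (map2 h (take (Suc j) xs) (rs @ [\<rho>])) @ u')} \<longleftrightarrow>
                 xs \<in> {xs. accepts D (concat (map2 h (take j xs) rs) @ h (xs ! j) \<rho> @ u')}"
        by simp
    qed
  qed
  finally show ?thesis .
qed

lemma hyb_j:
  assumes "j < m"
  shows "hyb Xs m r l h D j = EXP (uniform_bits ((m - Suc j) * l)) (\<lambda>u'. EXP (uniform_seeds j r) (\<lambda>rs.
          PR (pair_pmf (map_pmf (take j) Xs) (uniform_bits l)) {(v, w). accepts D (concat (map2 h v rs) @ w @ u')}))"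
proof -
  have ml: "(m - j) * l = l + (m - Suc j) * l" using assms
    by (metis Suc_diff_Suc mult_Suc)
  have "hyb Xs m r l h D j = EXP (uniform_bits ((m - j) * l)) (\<lambda>u.
          PR (pair_pmf Xs (uniform_seeds j r)) {(xs, rs). accepts D (concat (map2 h (take j xs) rs) @ u)})"
    unfolding hyb_def by (simp add: prob_pair2 case_prod_beta)
  also have "\<dots> = EXP (uniform_bits ((m - Suc j) * l)) (\<lambda>u'. EXP (uniform_bits l) (\<lambda>w.
          PR (pair_pmf Xs (uniform_seeds j r)) {(xs, rs). accepts D (concat (map2 h (take j xs) rs) @ w @ u')}))"
    unfolding ml uniform_bits_add
    by (simp add: case_prod_beta expectation_pair_pmf2[where B=1])
  also have "\<dots> = EXP (uniform_bits ((m - Suc j) * l)) (\<lambda>u'. EXP (uniform_bits l) (\<lambda>w.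
          EXP (uniform_seeds j r) (\<lambda>rs. PR Xs {xs. accepts D (concat (map2 h (take j xs) rs) @ w @ u')})))"
    by (simp add: prob_pair2 case_prod_beta)
  also have "\<dots> = EXP (uniform_bits ((m - Suc j) * l)) (\<lambda>u'. EXP (uniform_seeds j r) (\<lambda>rs.
          EXP (uniform_bits l) (\<lambda>w. PR Xs {xs. accepts D (concat (map2 h (take j xs) rs) @ w @ u')})))"
    by (subst EX_swap[where B=1]) simp_all
  also have "\<dots> = EXP (uniform_bits ((m - Suc j) * l)) (\<lambda>u'. EXP (uniform_seeds j r) (\<lambda>rs.
          PR (pair_pmf (map_pmf (take j) Xs) (uniform_bits l)) {(v, w). accepts D (concat (map2 h v rs) @ w @ u')}))"
    by (simp add: prob_pair2 case_prod_beta)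
  finally show ?thesis .
qed

definition Aj :: "(bool list list \<times> bool list) pmf \<Rightarrow> nat \<Rightarrow> (bool list \<Rightarrow> bool list \<Rightarrow> bool list) \<Rightarrow> (bool list list \<times> bool list) pmf" where
  "Aj Y r h = map_pmf (\<lambda>(p, \<rho>). (fst p, h (snd p) \<rho>)) (pair_pmf Y (uniform_bits r))"

definition Bj :: "(bool list list \<times> bool list) pmf \<Rightarrow> nat \<Rightarrow> (bool list list \<times> bool list) pmf" where
  "Bj Y l = pair_pmf (map_pmf fst Y) (uniform_bits l)"

definition Sst where "Sst Y r l h = {q. pmf (Bj Y l) q < pmf (Aj Y r h) q}"

definition delta :: "(bool list list \<times> bool list) pmf \<Rightarrow> nat \<Rightarrow> nat \<Rightarrow> (bool list \<Rightarrow> bool list \<Rightarrow> bool list) \<Rightarrow> real" where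
  "delta Y r l h = PR (Aj Y r h) (Sst Y r l h) - PR (Bj Y l) (Sst Y r l h)"

lemma finite_Aj: "finite (set_pmf Y) \<Longrightarrow> finite (set_pmf (Aj Y r h))"
  unfolding Aj_def by (simp add: finite_bitstrings)

lemma finite_Bj: "finite (set_pmf Y) \<Longrightarrow> finite (set_pmf (Bj Y l))"
  unfolding Bj_def by (simp add: finite_bitstrings)

lemma delta_bound:
  assumes "finite (set_pmf Y)"
  shows "\<bar>PR (Aj Y r h) S - PR (Bj Y l) S\<bar> \<le> delta Y r l h"
  unfolding delta_def Sst_def by (rule hahn[OF finite_Aj[OF assms] finite_Bj[OF assms]])

lemma delta_nonneg: "finite (set_pmf Y) \<Longrightarrow> 0 \<le> delta Y r l h"
  using delta_bound[of Y r h "{}" l] by simp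

lemma delta_le2: "\<bar>delta Y r l h\<bar> \<le> 2"
proof -
  have "\<bar>PR (Aj Y r h) (Sst Y r l h)\<bar> \<le> 1" "\<bar>PR (Bj Y l) (Sst Y r l h)\<bar> \<le> 1" by simp_all
  then show ?thesis unfolding delta_def by linarith
qed

lemma step2:
  assumes "j < m" "finite (set_pmf Y)" "map_pmf fst Y = map_pmf (take j) Xs"
  shows "\<bar>EXP (uniform_bits ((m - Suc j) * l)) (\<lambda>u'. EXP (uniform_seeds j r) (\<lambda>rs.
          EXP (uniform_bits r) (\<lambda>\<rho>. PR Y {p. accepts D (concat (map2 h (fst p) rs) @ h (snd p) \<rho> @ u')})))
         - hyb Xs m r l h D j\<bar> \<le> delta Y r l h"
proof -
  have M: "EXP (uniform_bits r) (\<lambda>\<rho>. PR Y {p. accepts D (concat (map2 h (fst p) rs) @ h (snd p) \<rho> @ u')})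
     = PR (Aj Y r h) {(v, w). accepts D (concat (map2 h v rs) @ w @ u')}" for rs u'
    unfolding Aj_def by (simp add: prob_pair2 case_prod_beta)
  have B: "PR (pair_pmf (map_pmf (take j) Xs) (uniform_bits l)) {(v, w). accepts D (concat (map2 h v rs) @ w @ u')}
     = PR (Bj Y l) {(v, w). accepts D (concat (map2 h v rs) @ w @ u')}" for rs u'
    unfolding Bj_def assms(3) ..
  show ?thesis
    unfolding hyb_j[OF assms(1)] M B
    by (intro abs_EX_diff_le[where B=1] EX_bound[where B=1] delta_bound[OF assms(2)]) simp_all
qed

lemma core:
  assumes "j < m"
    and Xl: "\<forall>xs\<in>set_pmf Xs. length xs = m \<and> (\<forall>x\<in>set xs. length x = t)"
    and Yfst: "map_pmf fst Y = map_pmf (take j) Xs"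
    and Ysnd: "\<forall>p\<in>set_pmf Y. length (snd p) = t"
    and Ydist: "\<forall>D'. small_distinguisher T D' \<longrightarrow>
           \<bar>PR Xs {xs. accepts D' (concat (take j xs) @ xs ! j)} - PR Y {p. accepts D' (concat (fst p) @ snd p)}\<bar> \<le> \<epsilon>1"
    and comp: "computes C t r h" "int (circ_size C) \<le> T0"
    and D: "small_distinguisher (T - int m * T0) D"
    and rs: "rs \<in> seedset j r" and \<rho>: "length \<rho> = r"
  shows "\<bar>PR Xs {xs. accepts D (concat (map2 h (take j xs) rs) @ h (xs ! j) \<rho> @ u')}
         - PR Y {p. accepts D (concat (map2 h (fst p) rs) @ h (snd p) \<rho> @ u')}\<bar> \<le> \<epsilon>1"
proof -
  define D' where "D' = dprime D C t (rs @ [\<rho>]) u'"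
  have lrs: "length rs = j" "\<forall>\<rho>'\<in>set (rs @ [\<rho>]). length \<rho>' = r" using rs \<rho> by (auto simp: seedset_def)
  note dp = dprime[OF comp(1) lrs(2), where D=D and u'=u']
  have T0: "0 \<le> T0" using comp(2) by linarith
  have "int (circ_size D') = int (circ_size D) + int (Suc j) * int (circ_size C)"
    unfolding D'_def dp(1) using lrs by (simp add: algebra_simps)
  also have "\<dots> \<le> (T - int m * T0) + int m * T0"
  proof -
    have "int (Suc j) * int (circ_size C) \<le> int (Suc j) * T0" using comp(2) by (intro mult_left_mono) auto
    also have "\<dots> \<le> int m * T0" using assms(1) T0 by (intro mult_right_mono) auto
    finally show ?thesis using D unfolding small_distinguisher_def by linarith
  qed
  finally have "int (circ_size D') \<le> T" by simp
  moreover have "distinguisher D'" unfolding D'_def dp(2) using D by (simp add: small_distinguisher_def)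
  ultimately have sD: "small_distinguisher T D'" by (simp add: small_distinguisher_def)
  have key: "accepts D' (concat v @ x) = accepts D (concat (map2 h v rs) @ h x \<rho> @ u')"
    if "length v = j" "\<forall>y\<in>set v. length y = t" "length x = t" for v x
  proof -
    have "concat v @ x = concat (v @ [x])" by simp
    moreover have "circ_eval D' (concat (v @ [x])) = circ_eval D (concat (map2 h (v @ [x]) (rs @ [\<rho>])) @ u')"
      unfolding D'_def using that lrs by (intro dp(3)) auto
    moreover have "map2 h (v @ [x]) (rs @ [\<rho>]) = map2 h v rs @ [h x \<rho>]" using that lrs by simp
    ultimately show ?thesis unfolding accepts_def by simp
  qed
  have e1: "PR Xs {xs. accepts D (concat (map2 h (take j xs) rs) @ h (xs ! j) \<rho> @ u')}
      = PR Xs {xs. accepts D' (concat (take j xs) @ xs ! j)}"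
  proof (rule prob_cong_supp)
    fix xs assume "xs \<in> set_pmf Xs"
    then have "length xs = m" "\<forall>x\<in>set xs. length x = t" using Xl by auto
    then have "length (take j xs) = j" "\<forall>y\<in>set (take j xs). length y = t" "length (xs ! j) = t"
      using assms(1) by (auto dest: in_set_takeD)
    then show "xs \<in> {xs. accepts D (concat (map2 h (take j xs) rs) @ h (xs ! j) \<rho> @ u')} \<longleftrightarrow>
               xs \<in> {xs. accepts D' (concat (take j xs) @ xs ! j)}"
      using key by simp
  qed
  have e2: "PR Y {p. accepts D (concat (map2 h (fst p) rs) @ h (snd p) \<rho> @ u')}
      = PR Y {p. accepts D' (concat (fst p) @ snd p)}"
  proof (rule prob_cong_supp)
    fix p assume p: "p \<in> set_pmf Y"
    then have "fst p \<in> set_pmf (map_pmf fst Y)" by simp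
    then obtain xs where xs: "xs \<in> set_pmf Xs" "fst p = take j xs" unfolding Yfst by auto
    then have "length xs = m" "\<forall>x\<in>set xs. length x = t" using Xl by auto
    then have "length (fst p) = j" "\<forall>y\<in>set (fst p). length y = t"
      using assms(1) xs(2) by (auto dest: in_set_takeD)
    moreover have "length (snd p) = t" using Ysnd p by auto
    ultimately show "p \<in> {p. accepts D (concat (map2 h (fst p) rs) @ h (snd p) \<rho> @ u')} \<longleftrightarrow>
               p \<in> {p. accepts D' (concat (fst p) @ snd p)}"
      using key by simp
  qed
  show ?thesis unfolding e1 e2 using Ydist sD by blast
qed

lemma step1:
  assumes "j < m"
    and Xl: "\<forall>xs\<in>set_pmf Xs. length xs = m \<and> (\<forall>x\<in>set xs. length x = t)"
    and Yfst: "map_pmf fst Y = map_pmf (take j) Xs"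
    and Ysnd: "\<forall>p\<in>set_pmf Y. length (snd p) = t"
    and Ydist: "\<forall>D'. small_distinguisher T D' \<longrightarrow>
           \<bar>PR Xs {xs. accepts D' (concat (take j xs) @ xs ! j)} - PR Y {p. accepts D' (concat (fst p) @ snd p)}\<bar> \<le> \<epsilon>1"
    and comp: "computes C t r h" "int (circ_size C) \<le> T0"
    and D: "small_distinguisher (T - int m * T0) D"
  shows "\<bar>hyb Xs m r l h D (Suc j) - EXP (uniform_bits ((m - Suc j) * l)) (\<lambda>u'. EXP (uniform_seeds j r) (\<lambda>rs.
          EXP (uniform_bits r) (\<lambda>\<rho>. PR Y {p. accepts D (concat (map2 h (fst p) rs) @ h (snd p) \<rho> @ u')})))\<bar> \<le> \<epsilon>1"
proof -
  have Xm: "\<forall>xs\<in>set_pmf Xs. length xs = m" using Xl by auto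
  show ?thesis
    unfolding hyb_Suc[OF assms(1) Xm]
  proof (intro abs_EX_diff_le[where B=1] EX_bound[where B=1])
    fix u' rs \<rho>
    assume "rs \<in> set_pmf (uniform_seeds j r)" "\<rho> \<in> set_pmf (uniform_bits r)"
    then have "rs \<in> seedset j r" "length \<rho> = r" by (auto simp: bitstrings_def)
    then show "\<bar>PR Xs {xs. accepts D (concat (map2 h (take j xs) rs) @ h (xs ! j) \<rho> @ u')}
         - PR Y {p. accepts D (concat (map2 h (fst p) rs) @ h (snd p) \<rho> @ u')}\<bar> \<le> \<epsilon>1"
      by (rule core[OF assms])
  qed simp_all
qed


lemma Y_decomp:
  fixes Y :: "('a \<times> 'b) pmf"
  shows "Y = bind_pmf (map_pmf fst Y) (\<lambda>v. map_pmf (Pair v) (map_pmf snd (cond_pmf Y {p. fst p = v})))"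
proof -
  have "bind_pmf (map_pmf fst Y) (\<lambda>v. cond_pmf Y {p. fst p = v}) = Y"
  proof (rule bind_cond_pmf_cancel)
    fix x assume "x \<in> set_pmf (map_pmf fst Y)"
    then show "set_pmf Y \<inter> {p. fst p = x} \<noteq> {}" by auto
  next
    fix y assume "y \<in> set_pmf Y"
    then show "set_pmf (map_pmf fst Y) \<inter> {x. fst y = x} \<noteq> {}" by auto
  next
    fix x :: 'a and y :: "'a \<times> 'b" assume "fst y = x"
    then show "measure_pmf.prob Y {p. fst p = x} = measure_pmf.prob (map_pmf fst Y) {x. fst y = x}"
      by (simp add: vimage_def)
  qed
  moreover have "bind_pmf (map_pmf fst Y) (\<lambda>v. cond_pmf Y {p. fst p = v})
      = bind_pmf (map_pmf fst Y) (\<lambda>v. map_pmf (Pair v) (map_pmf snd (cond_pmf Y {p. fst p = v})))"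
  proof (rule bind_pmf_cong[OF refl])
    fix v assume v: "v \<in> set_pmf (map_pmf fst Y)"
    then have ne: "set_pmf Y \<inter> {p. fst p = v} \<noteq> {}" by auto
    have "map_pmf (Pair v) (map_pmf snd (cond_pmf Y {p. fst p = v})) = map_pmf (\<lambda>p. (v, snd p)) (cond_pmf Y {p. fst p = v})"
      by (simp add: pmf.map_comp comp_def)
    also have "\<dots> = map_pmf id (cond_pmf Y {p. fst p = v})"
      by (rule map_pmf_cong[OF refl]) (use ne in \<open>auto simp: set_cond_pmf[OF ne]\<close>)
    finally show "cond_pmf Y {p. fst p = v} = map_pmf (Pair v) (map_pmf snd (cond_pmf Y {p. fst p = v}))"
      by simp
  qed
  ultimately show ?thesis by simp
qed

lemma pmf_cond_snd:
  fixes Y :: "('a \<times> 'b) pmf"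
  assumes v: "v \<in> set_pmf (map_pmf fst Y)"
  shows "pmf (map_pmf snd (cond_pmf Y {p. fst p = v})) y = pmf Y (v, y) / pmf (map_pmf fst Y) v"
proof -
  have ne: "set_pmf Y \<inter> {p. fst p = v} \<noteq> {}" using v by auto
  have "pmf (map_pmf snd (cond_pmf Y {p. fst p = v})) y = PR (cond_pmf Y {p. fst p = v}) (snd -` {y})"
    by (simp add: pmf_map)
  also have "\<dots> = PR (cond_pmf Y {p. fst p = v}) {(v, y)}"
    by (rule prob_cong_supp) (auto simp: set_cond_pmf[OF ne])
  also have "\<dots> = pmf (cond_pmf Y {p. fst p = v}) (v, y)"
    by (simp add: measure_pmf_single)
  also have "\<dots> = pmf Y (v, y) / PR Y {p. fst p = v}"
    by (simp add: pmf_cond[OF ne])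
  also have "PR Y {p. fst p = v} = pmf (map_pmf fst Y) v"
    by (simp add: pmf_map vimage_def)
  finally show ?thesis .
qed

lemma ext_bound:
  assumes ext: "extractor_family t r l \<alpha> \<epsilon>2 H"
    and fin: "finite (set_pmf Y)"
    and Ysnd: "\<forall>p\<in>set_pmf Y. length (snd p) = t"
    and ment: "cond_min_entropy_ge \<alpha> Y"
  shows "EXP H (\<lambda>h. delta Y r l h) \<le> \<epsilon>2"
proof -
  define mY where "mY = map_pmf fst Y"
  define Xv where "Xv = (\<lambda>v. map_pmf snd (cond_pmf Y {p. fst p = v}))"
  have Ydec: "Y = bind_pmf mY (\<lambda>v. map_pmf (Pair v) (Xv v))"
    unfolding mY_def Xv_def by (rule Y_decomp)
  define a where "a = (\<lambda>h v. PR (pair_pmf (Xv v) (uniform_bits r)) {(y, \<rho>). (v, h y \<rho>) \<in> Sst Y r l h})"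
  define b where "b = (\<lambda>h v. PR (uniform_bits l) {w. (v, w) \<in> Sst Y r l h})"
  have dl: "delta Y r l h = EXP mY (\<lambda>v. a h v - b h v)" for h
  proof -
    have "PR (Aj Y r h) (Sst Y r l h) = EXP Y (\<lambda>p. PR (uniform_bits r) {\<rho>. (fst p, h (snd p) \<rho>) \<in> Sst Y r l h})"
      unfolding Aj_def by (simp add: prob_pair1 case_prod_beta)
    also have "\<dots> = EXP (bind_pmf mY (\<lambda>v. map_pmf (Pair v) (Xv v))) (\<lambda>p. PR (uniform_bits r) {\<rho>. (fst p, h (snd p) \<rho>) \<in> Sst Y r l h})"
      by (subst (1) Ydec) (rule refl)
    also have "\<dots> = EXP mY (\<lambda>v. EXP (Xv v) (\<lambda>y. PR (uniform_bits r) {\<rho>. (v, h y \<rho>) \<in> Sst Y r l h}))"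
      by (subst expectation_bind_pmf[where B=1]) simp_all
    also have "\<dots> = EXP mY (\<lambda>v. a h v)"
      unfolding a_def by (simp add: prob_pair1 case_prod_beta)
    finally have A: "PR (Aj Y r h) (Sst Y r l h) = EXP mY (\<lambda>v. a h v)" .
    have B: "PR (Bj Y l) (Sst Y r l h) = EXP mY (\<lambda>v. b h v)"
      unfolding Bj_def b_def mY_def by (simp add: prob_pair1)
    have ia: "integrable (measure_pmf mY) (\<lambda>v. a h v)" by (rule integrable_bounded_pmf[where B=1]) (simp add: a_def)
    have ib: "integrable (measure_pmf mY) (\<lambda>v. b h v)" by (rule integrable_bounded_pmf[where B=1]) (simp add: b_def)
    show ?thesis unfolding delta_def A B using ia ib by simp
  qed
  have "EXP H (\<lambda>h. delta Y r l h) = EXP H (\<lambda>h. EXP mY (\<lambda>v. a h v - b h v))"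
    unfolding dl ..
  also have "\<dots> = EXP mY (\<lambda>v. EXP H (\<lambda>h. a h v - b h v))"
  proof (rule EX_swap[where B=2])
    fix h v have "\<bar>a h v\<bar> \<le> 1" "\<bar>b h v\<bar> \<le> 1" by (simp_all add: a_def b_def)
    then show "\<bar>a h v - b h v\<bar> \<le> 2" by linarith
  qed
  also have "\<dots> \<le> \<epsilon>2"
  proof (rule measure_pmf.integral_le_const)
    show "integrable (measure_pmf mY) (\<lambda>v. EXP H (\<lambda>h. a h v - b h v))"
    proof (rule integrable_bounded_pmf[where B=2], rule EX_bound)
      fix v h have "\<bar>a h v\<bar> \<le> 1" "\<bar>b h v\<bar> \<le> 1" by (simp_all add: a_def b_def)
      then show "\<bar>a h v - b h v\<bar> \<le> 2" by linarith
    qed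
    show "AE v in measure_pmf mY. EXP H (\<lambda>h. a h v - b h v) \<le> \<epsilon>2"
      unfolding AE_measure_pmf_iff
    proof
      fix v assume v: "v \<in> set_pmf mY"
      have ne: "set_pmf Y \<inter> {p. fst p = v} \<noteq> {}" using v unfolding mY_def by auto
      have Xsub: "set_pmf (Xv v) \<subseteq> bitstrings t"
        using Ysnd unfolding Xv_def by (auto simp: set_cond_pmf[OF ne] bitstrings_def)
      have pos: "0 < pmf mY v" using v by (simp add: pmf_positive)
      have Xme: "has_min_entropy \<alpha> (Xv v)"
        unfolding has_min_entropy_def
      proof
        fix y
        have "pmf (Xv v) y = pmf Y (v, y) / pmf mY v"
          unfolding Xv_def mY_def by (rule pmf_cond_snd) (use v in \<open>simp add: mY_def\<close>)
        also have "\<dots> \<le> 2 powr (- \<alpha>)"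
        proof -
          have "pmf Y (v, y) \<le> 2 powr (- \<alpha>) * pmf mY v"
            using ment v unfolding cond_min_entropy_ge_def mY_def by blast
          then show ?thesis using pos by (simp add: divide_le_eq)
        qed
        finally show "pmf (Xv v) y \<le> 2 powr (- \<alpha>)" .
      qed
      define \<Sigma> where "\<Sigma> = {(h, z). (v, z) \<in> Sst Y r l h}"
      have sd: "\<bar>PR (map_pmf (\<lambda>(h, x, \<rho>). (h, h x \<rho>)) (pair_pmf H (pair_pmf (Xv v) (uniform_bits r)))) \<Sigma>
               - PR (pair_pmf H (uniform_bits l)) \<Sigma>\<bar> \<le> \<epsilon>2"
        using ext Xsub Xme unfolding extractor_family_def within_sd_def by blast
      have ea: "EXP H (\<lambda>h. a h v) = PR (map_pmf (\<lambda>(h, x, \<rho>). (h, h x \<rho>)) (pair_pmf H (pair_pmf (Xv v) (uniform_bits r)))) \<Sigma>"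
        unfolding a_def \<Sigma>_def by (simp add: prob_pair1 case_prod_beta)
      have eb: "EXP H (\<lambda>h. b h v) = PR (pair_pmf H (uniform_bits l)) \<Sigma>"
        unfolding b_def \<Sigma>_def by (simp add: prob_pair1)
      have ia: "integrable (measure_pmf H) (\<lambda>h. a h v)" by (rule integrable_bounded_pmf[where B=1]) (simp add: a_def)
      have ib: "integrable (measure_pmf H) (\<lambda>h. b h v)" by (rule integrable_bounded_pmf[where B=1]) (simp add: b_def)
      have "EXP H (\<lambda>h. a h v - b h v) = EXP H (\<lambda>h. a h v) - EXP H (\<lambda>h. b h v)"
        using ia ib by simp
      then show "EXP H (\<lambda>h. a h v - b h v) \<le> \<epsilon>2" using sd ea eb by linarith
    qed
  qed
  finally show ?thesis .
qed


lemma per_h: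
  assumes Xl: "\<forall>xs\<in>set_pmf Xs. length xs = m \<and> (\<forall>x\<in>set xs. length x = t)"
    and Yf: "\<forall>j<m. map_pmf fst (Yf j) = map_pmf (take j) Xs \<and> (\<forall>p\<in>set_pmf (Yf j). length (snd p) = t) \<and>
          (\<forall>D. small_distinguisher T D \<longrightarrow>
           \<bar>PR Xs {xs. accepts D (concat (take j xs) @ xs ! j)} - PR (Yf j) {p. accepts D (concat (fst p) @ snd p)}\<bar> \<le> \<epsilon>1)"
    and finY: "\<forall>j<m. finite (set_pmf (Yf j))"
    and comp: "computes C t r h" "int (circ_size C) \<le> T0"
  shows "pseudorandom (T - int m * T0) (real m * \<epsilon>1 + (\<Sum>j<m. delta (Yf j) r l h)) (m * l) (extracted h Xs m r)"
  unfolding pseudorandom_def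
proof (intro allI impI)
  fix D assume D: "small_distinguisher (T - int m * T0) D"
  have Xm: "\<forall>xs\<in>set_pmf Xs. length xs = m" using Xl by auto
  have st: "\<bar>hyb Xs m r l h D (Suc j) - hyb Xs m r l h D j\<bar> \<le> \<epsilon>1 + delta (Yf j) r l h" if j: "j < m" for j
  proof -
    let ?M = "EXP (uniform_bits ((m - Suc j) * l)) (\<lambda>u'. EXP (uniform_seeds j r) (\<lambda>rs.
          EXP (uniform_bits r) (\<lambda>\<rho>. PR (Yf j) {p. accepts D (concat (map2 h (fst p) rs) @ h (snd p) \<rho> @ u')})))"
    have a: "\<bar>hyb Xs m r l h D (Suc j) - ?M\<bar> \<le> \<epsilon>1"
      using Yf j by (intro step1[OF j Xl _ _ _ comp D]) auto
    have b: "\<bar>?M - hyb Xs m r l h D j\<bar> \<le> delta (Yf j) r l h"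
      using Yf finY j by (intro step2[OF j]) auto
    show ?thesis using a b by linarith
  qed
  have "\<bar>PR (extracted h Xs m r) {z. accepts D z} - PR (uniform_bits (m * l)) {z. accepts D z}\<bar>
      = \<bar>hyb Xs m r l h D m - hyb Xs m r l h D 0\<bar>"
    by (simp add: hyb_0 hyb_m[OF Xm])
  also have "\<dots> \<le> (\<Sum>j<m. \<bar>hyb Xs m r l h D (Suc j) - hyb Xs m r l h D j\<bar>)"
    by (rule telescope)
  also have "\<dots> \<le> (\<Sum>j<m. \<epsilon>1 + delta (Yf j) r l h)"
    by (rule sum_mono) (use st in auto)
  also have "\<dots> = real m * \<epsilon>1 + (\<Sum>j<m. delta (Yf j) r l h)"
    by (simp add: sum.distrib)
  finally show "\<bar>PR (extracted h Xs m r) {z. accepts D z} - PR (uniform_bits (m * l)) {z. accepts D z}\<bar>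
      \<le> real m * \<epsilon>1 + (\<Sum>j<m. delta (Yf j) r l h)" .
qed

lemma pseudorandom_mono: "pseudorandom s e N Z \<Longrightarrow> e \<le> e' \<Longrightarrow> pseudorandom s e' N Z"
  unfolding pseudorandom_def by force

theorem mainTheorem8:
  fixes m t r l :: nat and T T0 :: int and \<epsilon>1 \<epsilon>2 \<alpha> :: real
    and Xs :: "bool list list pmf"
    and H :: "(bool list \<Rightarrow> bool list \<Rightarrow> bool list) pmf"
  assumes "joint_bits m t Xs"
    and "cond_pseudo_min_entropy m t Xs T \<epsilon>1 \<alpha>"
    and "extractor_family t r l \<alpha> \<epsilon>2 H"
    and "\<forall>h \<in> set_pmf H. \<exists>C. circ_size C \<le> T0 \<and> computes C t r h"
  shows "measure_pmf.prob H
           {h. pseudorandom (T - int m * T0) (real m * \<epsilon>1 + 2 * (real m)^2 * \<epsilon>2) (m * l)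
                 (extracted h Xs m r)} \<ge> 1/2"
proof -
  have Xl: "\<forall>xs\<in>set_pmf Xs. length xs = m \<and> (\<forall>x\<in>set xs. length x = t)"
    using assms(1) unfolding joint_bits_def by blast
  have finXs: "finite (set_pmf Xs)"
  proof (rule finite_subset)
    show "set_pmf Xs \<subseteq> {xs. set xs \<subseteq> bitstrings t \<and> length xs = m}"
      using Xl by (auto simp: bitstrings_def)
    show "finite {xs. set xs \<subseteq> bitstrings t \<and> length xs = m}"
      by (rule finite_lists_length_eq[OF finite_bitstrings])
  qed
  define P where "P = (\<lambda>j (Y :: (bool list list \<times> bool list) pmf).
        map_pmf fst Y = map_pmf (take j) Xs \<and>
        (\<forall>p \<in> set_pmf Y. length (snd p) = t) \<and>
        cond_min_entropy_ge \<alpha> Y \<and>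
        (\<forall>D. small_distinguisher T D \<longrightarrow>
           \<bar>PR Xs {xs. accepts D (concat (take j xs) @ xs ! j)}
            - PR Y {p. accepts D (concat (fst p) @ snd p)}\<bar> \<le> \<epsilon>1))"
  have "\<forall>i<m. \<exists>Y. P i Y"
    using assms(2) unfolding cond_pseudo_min_entropy_def P_def .
  then have "\<forall>i\<in>{..<m}. \<exists>Y. P i Y" by simp
  then obtain Yf where "\<forall>i\<in>{..<m}. P i (Yf i)" using bchoice by blast
  then have Yf: "\<forall>j<m. map_pmf fst (Yf j) = map_pmf (take j) Xs \<and>
        (\<forall>p \<in> set_pmf (Yf j). length (snd p) = t) \<and>
        cond_min_entropy_ge \<alpha> (Yf j) \<and>
        (\<forall>D. small_distinguisher T D \<longrightarrow>
           \<bar>PR Xs {xs. accepts D (concat (take j xs) @ xs ! j)}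
            - PR (Yf j) {p. accepts D (concat (fst p) @ snd p)}\<bar> \<le> \<epsilon>1)"
    unfolding P_def by simp
  have finY: "\<forall>j<m. finite (set_pmf (Yf j))"
  proof (intro allI impI)
    fix j assume j: "j < m"
    show "finite (set_pmf (Yf j))"
    proof (rule finite_subset)
      show "set_pmf (Yf j) \<subseteq> (take j ` set_pmf Xs) \<times> bitstrings t"
      proof
        fix p assume p: "p \<in> set_pmf (Yf j)"
        then have "fst p \<in> set_pmf (map_pmf fst (Yf j))" by simp
        then have "fst p \<in> take j ` set_pmf Xs" using Yf j by simp
        moreover have "snd p \<in> bitstrings t" using Yf j p by (auto simp: bitstrings_def)
        ultimately show "p \<in> (take j ` set_pmf Xs) \<times> bitstrings t" by (cases p) auto
      qed
      show "finite ((take j ` set_pmf Xs) \<times> bitstrings t)" using finXs finite_bitstrings by simp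
    qed
  qed
  define \<Delta> where "\<Delta> = (\<lambda>h. \<Sum>j<m. delta (Yf j) r l h)"
  have \<Delta>nn: "0 \<le> \<Delta> h" for h
    unfolding \<Delta>_def using finY by (intro sum_nonneg) (auto intro: delta_nonneg)
  have \<Delta>b: "\<bar>\<Delta> h\<bar> \<le> 2 * real m" for h
  proof -
    have "\<bar>\<Delta> h\<bar> \<le> (\<Sum>j<m. \<bar>delta (Yf j) r l h\<bar>)" unfolding \<Delta>_def by (rule sum_abs)
    also have "\<dots> \<le> (\<Sum>j<m. 2)" by (rule sum_mono) (rule delta_le2)
    finally show ?thesis by simp
  qed
  have idel: "integrable (measure_pmf H) (\<lambda>h. delta (Yf j) r l h)" for j
    by (rule integrable_bounded_pmf[where B=2]) (rule delta_le2)
  have i\<Delta>: "integrable (measure_pmf H) \<Delta>"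
    by (rule integrable_bounded_pmf[where B="2 * real m"]) (rule \<Delta>b)
  have eb: "EXP H (\<lambda>h. delta (Yf j) r l h) \<le> \<epsilon>2" if "j < m" for j
    using Yf finY that by (intro ext_bound[OF assms(3)]) auto
  have E\<Delta>: "EXP H \<Delta> \<le> real m * \<epsilon>2"
  proof -
    have "EXP H \<Delta> = (\<Sum>j<m. EXP H (\<lambda>h. delta (Yf j) r l h))"
      unfolding \<Delta>_def using idel by (simp add: integral_sum)
    also have "\<dots> \<le> (\<Sum>j<m. \<epsilon>2)" by (rule sum_mono) (use eb in auto)
    finally show ?thesis by simp
  qed
  have e2: "0 \<le> \<epsilon>2" if "0 < m"
  proof -
    have "0 \<le> EXP H (\<lambda>h. delta (Yf 0) r l h)"
      using finY that by (intro integral_nonneg_AE AE_I2 delta_nonneg) auto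
    then show ?thesis using eb[OF that] by linarith
  qed
  define c where "c = 2 * real m * \<epsilon>2"
  have c0: "0 \<le> c" unfolding c_def using e2 by (cases "m = 0") auto
  have cle: "c \<le> 2 * (real m)^2 * \<epsilon>2"
  proof (cases "m = 0")
    case True then show ?thesis by (simp add: c_def)
  next
    case False
    then have "real m \<le> (real m)^2" by (simp add: power2_eq_square)
    then show ?thesis unfolding c_def using e2 False by (simp add: mult_right_mono)
  qed
  have bad: "PR H {h. c < \<Delta> h} \<le> 1/2"
  proof (cases "0 < c")
    case True
    have "PR H {h. c < \<Delta> h} \<le> PR H {h \<in> space (measure_pmf H). c \<le> \<Delta> h}"
      by (rule measure_pmf.finite_measure_mono) auto
    also have "\<dots> \<le> EXP H \<Delta> / c"
      by (rule integral_Markov_inequality_measure[OF i\<Delta>, where A=UNIV]) (auto simp: \<Delta>nn True)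
    also have "\<dots> \<le> (real m * \<epsilon>2) / c" using E\<Delta> True by (simp add: divide_right_mono)
    also have "\<dots> = 1/2"
    proof -
      have nz: "real m * \<epsilon>2 \<noteq> 0" using True unfolding c_def by (metis mult_eq_0_iff mult_zero_right order_less_irrefl)
      then show ?thesis unfolding c_def by (simp add: field_simps)
    qed
    finally show ?thesis .
  next
    case False
    then have c: "c = 0" using c0 by simp
    have "EXP H \<Delta> = 0"
    proof -
      have z0: "real m * \<epsilon>2 = 0" using c unfolding c_def by simp
      have "EXP H \<Delta> \<le> 0" using E\<Delta> z0 by linarith
      moreover have "0 \<le> EXP H \<Delta>" by (intro integral_nonneg_AE AE_I2 \<Delta>nn)
      ultimately show ?thesis by simp
    qed
    then have "AE h in measure_pmf H. \<Delta> h = 0"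
      using integral_nonneg_eq_0_iff_AE[OF i\<Delta>] \<Delta>nn by simp
    then have z: "\<forall>h\<in>set_pmf H. \<Delta> h = 0" by (simp add: AE_measure_pmf_iff)
    have "PR H {h. c < \<Delta> h} = PR H {}"
      by (rule prob_cong_supp) (use z c in auto)
    then show ?thesis by simp
  qed
  have good: "set_pmf H \<inter> {h. \<Delta> h \<le> c} \<subseteq> {h. pseudorandom (T - int m * T0) (real m * \<epsilon>1 + 2 * (real m)^2 * \<epsilon>2) (m * l) (extracted h Xs m r)}"
  proof
    fix h assume h: "h \<in> set_pmf H \<inter> {h. \<Delta> h \<le> c}"
    then obtain C where C: "circ_size C \<le> T0" "computes C t r h" using assms(4) by blast
    have "pseudorandom (T - int m * T0) (real m * \<epsilon>1 + \<Delta> h) (m * l) (extracted h Xs m r)"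
      unfolding \<Delta>_def using Yf finY C by (intro per_h[OF Xl]) auto
    moreover have "real m * \<epsilon>1 + \<Delta> h \<le> real m * \<epsilon>1 + 2 * (real m)^2 * \<epsilon>2" using h cle by simp
    ultimately show "h \<in> {h. pseudorandom (T - int m * T0) (real m * \<epsilon>1 + 2 * (real m)^2 * \<epsilon>2) (m * l) (extracted h Xs m r)}"
      by (auto intro: pseudorandom_mono)
  qed
  have "PR H {h. \<Delta> h \<le> c} = 1 - PR H {h. c < \<Delta> h}"
  proof -
    have "{h. \<Delta> h \<le> c} = space (measure_pmf H) - {h. c < \<Delta> h}" by auto
    then show ?thesis using measure_pmf.prob_compl[of "{h. c < \<Delta> h}" H] by simp
  qed
  also have "PR H {h. \<Delta> h \<le> c} = PR H (set_pmf H \<inter> {h. \<Delta> h \<le> c})"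
    by (rule prob_cong_supp) auto
  finally have "1/2 \<le> PR H (set_pmf H \<inter> {h. \<Delta> h \<le> c})" using bad by linarith
  also have "\<dots> \<le> PR H {h. pseudorandom (T - int m * T0) (real m * \<epsilon>1 + 2 * (real m)^2 * \<epsilon>2) (m * l) (extracted h Xs m r)}"
    by (rule measure_pmf.finite_measure_mono[OF good]) simp
  finally show ?thesis .
qed

end
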